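(* Let $X$ be a real random variable with distribution function $F$, $E|X|=\infty$, satisfying (Ha): $A(x)/(xH(x))\to\infty$ as $x\to\infty$. For $x>0$ let $\omega_x(\theta)=1-E[e^{i\theta X};|X|<x]$. Then $$|\omega_x'(\theta)|=A(x)\big\{1+o\big(\sqrt{|\theta|x}\big)\big\}$$ as $x\to\infty$, uniformly for $|\theta|>1/x$.
   Context: For $x\ge0$: $H(x)=1-F(x)+F(-x-0)$, $K(x)=1-F(x)-F(-x-0)$, $A(x)=\int_0^xK(t)dt$. $\omega_x'$ is the derivative in $\theta$. The notation means: $\big||\omega_x'(\theta)|-A(x)\big|\le \varepsilon(x)A(x)\sqrt{|\theta|x}$ for all $|\theta|>1/x$, with $\varepsilon(x)\to0$. *)

theory Defs
  imports "HOL-Probability.Probability"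
begin

definition distF :: "'a measure \<Rightarrow> ('a \<Rightarrow> real) \<Rightarrow> real \<Rightarrow> real" where
  "distF M X x = measure M {w \<in> space M. X w \<le> x}"

definition distF_left :: "'a measure \<Rightarrow> ('a \<Rightarrow> real) \<Rightarrow> real \<Rightarrow> real" where
  "distF_left M X x = measure M {w \<in> space M. X w < x}"

definition tailH :: "'a measure \<Rightarrow> ('a \<Rightarrow> real) \<Rightarrow> real \<Rightarrow> real" where
  "tailH M X x = 1 - distF M X x + distF_left M X (- x)"

definition tailK :: "'a measure \<Rightarrow> ('a \<Rightarrow> real) \<Rightarrow> real \<Rightarrow> real" where
  "tailK M X x = 1 - distF M X x - distF_left M X (- x)"

definition truncA :: "'a measure \<Rightarrow> ('a \<Rightarrow> real) \<Rightarrow> real \<Rightarrow> real" where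
  "truncA M X x = (LINT t:{0..x}|lborel. tailK M X t)"

definition omega :: "'a measure \<Rightarrow> ('a \<Rightarrow> real) \<Rightarrow> real \<Rightarrow> real \<Rightarrow> complex" where
  "omega M X x \<theta> = 1 - (LINT w:{w \<in> space M. \<bar>X w\<bar> < x}|M. cis (\<theta> * X w))"

end

theory Submission
  imports Defs
begin


lemma layer:
  assumes P: "prob_space M" and Y: "Y \<in> borel_measurable M" and x: "0 \<le> x"
  shows "(LINT t:{0..x}|lborel. measure M {w\<in>space M. t < Y w}) = (\<integral>w. min (max (Y w) 0) x \<partial>M)"
proof -
  interpret prob_space M by fact
  interpret pair_sigma_finite lborel M
    by (intro pair_sigma_finite.intro lborel.sigma_finite_measure_axioms sigma_finite_measure_axioms)
  define g where "g = (\<lambda>t. measure M {w\<in>space M. t < Y w})"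
  have "mono (\<lambda>t. - g t)"
    unfolding g_def mono_def using Y by (auto intro!: finite_measure_mono)
  then have "(\<lambda>t. - g t) \<in> borel_measurable borel" by (rule borel_measurable_mono)
  then have mg: "g \<in> borel_measurable borel" 
    using borel_measurable_uminus[of "\<lambda>t. - g t"] by simp
  define f where "f = (\<lambda>t w. if 0 \<le> t \<and> t \<le> x \<and> t < Y w then 1 else (0::ennreal))"
  have mf: "case_prod f \<in> borel_measurable (lborel \<Otimes>\<^sub>M M)"
    unfolding f_def using Y by measurable
  have i1: "(\<integral>\<^sup>+ w. f t w \<partial>M) = ennreal (indicator {0..x} t * g t)" for t
  proof -
    have "(\<integral>\<^sup>+ w. f t w \<partial>M) = (\<integral>\<^sup>+ w. (if 0 \<le> t \<and> t \<le> x then 1 else 0) * indicator {w\<in>space M. t < Y w} w \<partial>M)"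
      unfolding f_def by (intro nn_integral_cong) (auto simp: indicator_def)
    also have "\<dots> = (if 0 \<le> t \<and> t \<le> x then 1 else 0) * emeasure M {w\<in>space M. t < Y w}"
      using Y by (intro nn_integral_cmult_indicator) measurable
    also have "\<dots> = ennreal (indicator {0..x} t * g t)"
      by (auto simp: g_def emeasure_eq_measure indicator_def)
    finally show ?thesis .
  qed
  have i2: "(\<integral>\<^sup>+ t. f t w \<partial>lborel) = ennreal (min (max (Y w) 0) x)" for w
  proof -
    have "(\<integral>\<^sup>+ t. f t w \<partial>lborel) = (\<integral>\<^sup>+ t. indicator {t. 0 \<le> t \<and> t \<le> x \<and> t < Y w} t \<partial>lborel)"
      unfolding f_def by (intro nn_integral_cong) (auto simp: indicator_def)
    also have "\<dots> = emeasure lborel {t. 0 \<le> t \<and> t \<le> x \<and> t < Y w}"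
      by (intro nn_integral_indicator) measurable
    also have "\<dots> = ennreal (min (max (Y w) 0) x)"
    proof (cases "Y w \<le> 0")
      case True
      then have e: "{t. 0 \<le> t \<and> t \<le> x \<and> t < Y w} = {}" by auto
      show ?thesis unfolding e using True x by (simp add: min_def)
    next
      case False
      show ?thesis
      proof (cases "x < Y w")
        case True
        then have e: "{t. 0 \<le> t \<and> t \<le> x \<and> t < Y w} = {0..x}" by auto
        show ?thesis unfolding e using True x by simp
      next
        case F2: False
        then have e: "{t. 0 \<le> t \<and> t \<le> x \<and> t < Y w} = {0..<Y w}" using False by auto
        show ?thesis unfolding e using F2 False by simp
      qed
    qed
    finally show ?thesis .
  qed
  have "(LINT t:{0..x}|lborel. g t) = enn2real (\<integral>\<^sup>+ t. ennreal (indicator {0..x} t * g t) \<partial>lborel)"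
    unfolding set_lebesgue_integral_def using mg
    by (subst integral_eq_nn_integral) (auto simp: g_def)
  also have "\<dots> = enn2real (\<integral>\<^sup>+ t. (\<integral>\<^sup>+ w. f t w \<partial>M) \<partial>lborel)"
    by (simp add: i1)
  also have "\<dots> = enn2real (\<integral>\<^sup>+ w. (\<integral>\<^sup>+ t. f t w \<partial>lborel) \<partial>M)"
    using Fubini'[OF mf] by simp
  also have "\<dots> = enn2real (\<integral>\<^sup>+ w. ennreal (min (max (Y w) 0) x) \<partial>M)"
    by (simp add: i2)
  also have "\<dots> = (\<integral>w. min (max (Y w) 0) x \<partial>M)"
    using Y x by (subst integral_eq_nn_integral) auto
  finally show ?thesis unfolding g_def .
qed


lemma meas_tail_borel:
  fixes Y :: "'a \<Rightarrow> real"
  assumes P: "prob_space M" and Y: "Y \<in> borel_measurable M"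
  shows "(\<lambda>t. measure M {w\<in>space M. t < Y w}) \<in> borel_measurable borel"
proof -
  interpret prob_space M by fact
  have "mono (\<lambda>t. - measure M {w\<in>space M. t < Y w})"
    unfolding mono_def using Y by (auto intro!: finite_measure_mono)
  then have "(\<lambda>t. - measure M {w\<in>space M. t < Y w}) \<in> borel_measurable borel" by (rule borel_measurable_mono)
  then show ?thesis
    using borel_measurable_uminus[of "\<lambda>t. - measure M {w\<in>space M. t < Y w}"] by simp
qed

lemma tail_set_integrable:
  fixes Y :: "'a \<Rightarrow> real"
  assumes P: "prob_space M" and Y: "Y \<in> borel_measurable M"
  shows "set_integrable lborel {0..x} (\<lambda>t. measure M {w\<in>space M. t < Y w})"
proof -
  interpret prob_space M by fact
  show ?thesis unfolding set_integrable_def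
    using meas_tail_borel[OF P Y]
    by (intro integrableI_bounded_set_indicator[where B=1]) (auto simp: emeasure_lborel_Icc_eq)
qed

lemma tailK_eq:
  assumes P: "prob_space M" and X: "X \<in> borel_measurable M"
  shows "tailK M X t = measure M {w\<in>space M. t < X w} - measure M {w\<in>space M. t < - X w}"
proof -
  interpret prob_space M by fact
  have "measure M {w\<in>space M. t < X w} = measure M (space M - {w\<in>space M. X w \<le> t})"
    by (rule arg_cong[where f="measure M"]) auto
  also have "\<dots> = 1 - measure M {w\<in>space M. X w \<le> t}"
    using X by (intro prob_compl) measurable
  finally have 1: "measure M {w\<in>space M. t < X w} = 1 - measure M {w\<in>space M. X w \<le> t}" .
  have 2: "{w\<in>space M. t < - X w} = {w\<in>space M. X w < - t}" by auto
  show ?thesis unfolding tailK_def distF_def distF_left_def 1 2 by simp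
qed

lemma tailH_eq:
  assumes P: "prob_space M" and X: "X \<in> borel_measurable M" and t: "0 \<le> t"
  shows "tailH M X t = measure M {w\<in>space M. t < \<bar>X w\<bar>}"
proof -
  interpret prob_space M by fact
  have "measure M {w\<in>space M. t < X w} = measure M (space M - {w\<in>space M. X w \<le> t})"
    by (rule arg_cong[where f="measure M"]) auto
  also have "\<dots> = 1 - measure M {w\<in>space M. X w \<le> t}"
    using X by (intro prob_compl) measurable
  finally have 1: "measure M {w\<in>space M. t < X w} = 1 - measure M {w\<in>space M. X w \<le> t}" .
  have "{w\<in>space M. t < \<bar>X w\<bar>} = {w\<in>space M. t < X w} \<union> {w\<in>space M. X w < - t}"
    using t by auto
  then have "measure M {w\<in>space M. t < \<bar>X w\<bar>} = measure M {w\<in>space M. t < X w} + measure M {w\<in>space M. X w < - t}"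
    using X t by (simp, intro finite_measure_Union) auto
  then show ?thesis unfolding tailH_def distF_def distF_left_def 1 by simp
qed

lemma truncA_eq:
  assumes P: "prob_space M" and X: "X \<in> borel_measurable M" and x: "0 \<le> x"
  shows "truncA M X x = (\<integral>w. max (- x) (min x (X w)) \<partial>M)"
proof -
  interpret prob_space M by fact
  have X': "(\<lambda>w. - X w) \<in> borel_measurable M" using X by measurable
  have "truncA M X x = (LINT t:{0..x}|lborel. measure M {w\<in>space M. t < X w} - measure M {w\<in>space M. t < - X w})"
    unfolding truncA_def tailK_eq[OF P X] ..
  also have "\<dots> = (LINT t:{0..x}|lborel. measure M {w\<in>space M. t < X w}) - (LINT t:{0..x}|lborel. measure M {w\<in>space M. t < - X w})"
    by (intro set_integral_diff tail_set_integrable[OF P X] tail_set_integrable[OF P X'])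
  also have "\<dots> = (\<integral>w. min (max (X w) 0) x \<partial>M) - (\<integral>w. min (max (- X w) 0) x \<partial>M)"
    using layer[OF P X x] layer[OF P X' x] by simp
  also have "\<dots> = (\<integral>w. min (max (X w) 0) x - min (max (- X w) 0) x \<partial>M)"
  proof (rule Bochner_Integration.integral_diff[symmetric])
    show "integrable M (\<lambda>w. min (max (X w) 0) x)"
      using X x by (intro integrable_const_bound[where B=x]) auto
    show "integrable M (\<lambda>w. min (max (- X w) 0) x)"
      using X x by (intro integrable_const_bound[where B=x]) auto
  qed
  also have "\<dots> = (\<integral>w. max (- x) (min x (X w)) \<partial>M)"
    using x by (intro Bochner_Integration.integral_cong) auto
  finally show ?thesis .
qed



lemma cis_taylor1: "norm (cis b - 1 - \<i> * complex_of_real b) \<le> b^2 / 2"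
proof -
  have "cmod (exp (\<i> * complex_of_real b) - (\<Sum>k \<le> 1. (\<i> * complex_of_real b)^k / fact k)) \<le> \<bar>b\<bar>^(Suc 1) / fact (Suc 1)"
    by (rule iexp_approx1)
  then show ?thesis by (simp add: cis_conv_exp power2_eq_square diff_diff_eq)
qed

lemma cis_meas: "X \<in> borel_measurable M \<Longrightarrow> (\<lambda>w. cis (t * X w)) \<in> borel_measurable M"
  by (rule measurable_compose[where f="\<lambda>w. t * X w" and g=cis]) (auto intro!: borel_measurable_continuous_onI continuous_intros)


lemma omega_deriv:
  fixes x \<theta> :: real and X :: "'a \<Rightarrow> real"
  assumes P: "prob_space M" and X: "X \<in> borel_measurable M"
  defines "S \<equiv> {w\<in>space M. \<bar>X w\<bar> < x}"
  defines "Dv \<equiv> (\<lambda>\<theta>. \<integral>w. indicator S w *\<^sub>R (complex_of_real (X w) * cis (\<theta> * X w)) \<partial>M)"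
  shows "(omega M X x has_vector_derivative (- \<i> * Dv \<theta>)) (at \<theta>)"
proof -
  interpret prob_space M by fact
  have Sm: "S \<in> sets M" unfolding S_def using X by measurable
  have cm: "(\<lambda>w. cis (t * X w)) \<in> borel_measurable M" for t by (rule cis_meas[OF X])
  have Xc: "(\<lambda>w. complex_of_real (X w)) \<in> borel_measurable M" using X by measurable
  have bS: "w \<in> S \<Longrightarrow> \<bar>X w\<bar> \<le> x" for w unfolding S_def by auto
  have int1: "integrable M (\<lambda>w. indicator S w *\<^sub>R cis (t * X w))" for t
    using Sm cm by (intro integrableI_bounded_set_indicator[where B=1]) (auto simp: emeasure_eq_measure)
  have int2: "integrable M (\<lambda>w. indicator S w *\<^sub>R (complex_of_real (X w) * cis (t * X w)))" for t
    using Sm cm Xc bS by (intro integrableI_bounded_set_indicator[where B=x]) (auto simp: norm_mult emeasure_eq_measure)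
  define R where "R = (\<lambda>y w. indicator S w *\<^sub>R (cis (y * X w) - cis (\<theta> * X w) - (y - \<theta>) *\<^sub>R (\<i> * (complex_of_real (X w) * cis (\<theta> * X w)))))"
  have key: "omega M X x y - omega M X x \<theta> - (y - \<theta>) *\<^sub>R (- \<i> * Dv \<theta>) = - (\<integral>w. R y w \<partial>M)" for y
  proof -
    have "(\<integral>w. R y w \<partial>M) = (\<integral>w. indicator S w *\<^sub>R cis (y * X w) \<partial>M) - (\<integral>w. indicator S w *\<^sub>R cis (\<theta> * X w) \<partial>M)
        - (\<integral>w. (y - \<theta>) *\<^sub>R (\<i> * (indicator S w *\<^sub>R (complex_of_real (X w) * cis (\<theta> * X w)))) \<partial>M)"
    proof -
      define a where "a = (\<lambda>w. indicator S w *\<^sub>R cis (y * X w))"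
      define b where "b = (\<lambda>w. indicator S w *\<^sub>R cis (\<theta> * X w))"
      define c where "c = (\<lambda>w. (y - \<theta>) *\<^sub>R (\<i> * (indicator S w *\<^sub>R (complex_of_real (X w) * cis (\<theta> * X w)))))"
      have ia: "integrable M a" unfolding a_def by (rule int1)
      have ib: "integrable M b" unfolding b_def by (rule int1)
      have ic: "integrable M c" unfolding c_def
        by (intro Bochner_Integration.integrable_scaleR_right Bochner_Integration.integrable_mult_right int2)
      have "(\<integral>w. R y w \<partial>M) = (\<integral>w. (a w - b w) - c w \<partial>M)"
        unfolding R_def a_def b_def c_def
        by (intro Bochner_Integration.integral_cong) (auto simp: indicator_def)
      also have "\<dots> = (\<integral>w. a w - b w \<partial>M) - (\<integral>w. c w \<partial>M)"
        using ia ib ic by (intro Bochner_Integration.integral_diff Bochner_Integration.integrable_diff)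
      also have "\<dots> = (\<integral>w. a w \<partial>M) - (\<integral>w. b w \<partial>M) - (\<integral>w. c w \<partial>M)"
        using ia ib by (simp add: Bochner_Integration.integral_diff)
      finally show ?thesis unfolding a_def b_def c_def .
    qed
    also have "(\<integral>w. (y - \<theta>) *\<^sub>R (\<i> * (indicator S w *\<^sub>R (complex_of_real (X w) * cis (\<theta> * X w)))) \<partial>M)
        = (y - \<theta>) *\<^sub>R (\<i> * Dv \<theta>)"
      unfolding Dv_def by (simp only: integral_scaleR_right integral_mult_right_zero)
    finally show ?thesis
      unfolding omega_def set_lebesgue_integral_def S_def[symmetric]
      by (simp add: algebra_simps)
  qed
  have bnd: "norm (\<integral>w. R y w \<partial>M) \<le> (y - \<theta>)^2 * x^2 / 2" for y
  proof -
    have pw: "norm (R y w) \<le> (y - \<theta>)^2 * x^2 / 2" for w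
    proof (cases "w \<in> S")
      case True
      have "cis (y * X w) - cis (\<theta> * X w) - (y - \<theta>) *\<^sub>R (\<i> * (complex_of_real (X w) * cis (\<theta> * X w)))
          = cis (\<theta> * X w) * (cis ((y - \<theta>) * X w) - 1 - \<i> * complex_of_real ((y - \<theta>) * X w))"
        by (simp add: algebra_simps cis_mult scaleR_conv_of_real)
      then have "norm (R y w) = norm (cis ((y - \<theta>) * X w) - 1 - \<i> * complex_of_real ((y - \<theta>) * X w))"
        using True by (simp add: R_def norm_mult)
      also have "\<dots> \<le> ((y - \<theta>) * X w)^2 / 2" by (rule cis_taylor1)
      also have "\<dots> \<le> (y - \<theta>)^2 * x^2 / 2"
      proof -
        have "(X w)^2 \<le> x^2" using power_mono[OF bS[OF True] abs_ge_zero, of 2] by simp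
        then show ?thesis by (simp add: power_mult_distrib mult_left_mono)
      qed
      finally show ?thesis .
    qed (simp add: R_def)
    have mR: "R y \<in> borel_measurable M"
      unfolding R_def using cm[of y] cm[of \<theta>] Xc Sm by measurable
    have "integrable M (R y)"
      using pw mR by (intro integrable_const_bound[where B="(y - \<theta>)^2 * x^2 / 2"]) auto
    then have "(\<integral>w. norm (R y w) \<partial>M) \<le> (\<integral>w. (y - \<theta>)^2 * x^2 / 2 \<partial>M)"
      using pw by (intro integral_mono) auto
    then have "norm (\<integral>w. R y w \<partial>M) \<le> (\<integral>w. (y - \<theta>)^2 * x^2 / 2 \<partial>M)"
      using integral_norm_bound[of M "R y"] by linarith
    then show ?thesis by (simp add: prob_space)
  qed
  show ?thesis
    unfolding has_vector_derivative_def has_derivative_iff_norm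
  proof (intro conjI)
    show "bounded_linear (\<lambda>h. h *\<^sub>R (- \<i> * Dv \<theta>))" by (rule bounded_linear_scaleR_left)
    show "((\<lambda>y. norm (omega M X x y - omega M X x \<theta> - (y - \<theta>) *\<^sub>R (- \<i> * Dv \<theta>)) / norm (y - \<theta>)) \<longlongrightarrow> 0) (at \<theta>)"
    proof (rule Lim_null_comparison)
      show "\<forall>\<^sub>F y in at \<theta>. norm (norm (omega M X x y - omega M X x \<theta> - (y - \<theta>) *\<^sub>R (- \<i> * Dv \<theta>)) / norm (y - \<theta>)) \<le> \<bar>y - \<theta>\<bar> * x^2 / 2"
      proof (rule always_eventually, intro allI)
        fix y
        show "norm (norm (omega M X x y - omega M X x \<theta> - (y - \<theta>) *\<^sub>R (- \<i> * Dv \<theta>)) / norm (y - \<theta>)) \<le> \<bar>y - \<theta>\<bar> * x^2 / 2"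
        proof (cases "y = \<theta>")
          case False
          have "norm (omega M X x y - omega M X x \<theta> - (y - \<theta>) *\<^sub>R (- \<i> * Dv \<theta>)) \<le> \<bar>y - \<theta>\<bar> * (\<bar>y - \<theta>\<bar> * x^2 / 2)"
            using bnd[of y] unfolding key by (simp add: power2_eq_square mult_ac)
          then show ?thesis using False by (simp add: divide_simps mult_ac)
        qed simp
      qed
      show "((\<lambda>y. \<bar>y - \<theta>\<bar> * x^2 / 2) \<longlongrightarrow> 0) (at \<theta>)"
        by (rule tendsto_eq_intros refl | simp)+
    qed
  qed
qed



lemma cis_sub1_bound: "norm (cis a - 1) \<le> sqrt 2 * sqrt \<bar>a\<bar>"
proof -
  have "cmod (exp (\<i> * complex_of_real a) - (\<Sum>k \<le> 0. (\<i> * complex_of_real a)^k / fact k)) \<le> \<bar>a\<bar>^(Suc 0) / fact (Suc 0)"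
    by (rule iexp_approx1)
  then have h1: "norm (cis a - 1) \<le> \<bar>a\<bar>" by (simp add: cis_conv_exp)
  have h2: "norm (cis a - 1) \<le> 2"
    using norm_triangle_ineq4[of "cis a" 1] by simp
  have "(norm (cis a - 1))^2 \<le> 2 * \<bar>a\<bar>"
  proof -
    have "(norm (cis a - 1))^2 = norm (cis a - 1) * norm (cis a - 1)" by (simp add: power2_eq_square)
    also have "\<dots> \<le> 2 * \<bar>a\<bar>" using h1 h2 by (intro mult_mono) auto
    finally show ?thesis .
  qed
  then have "norm (cis a - 1) \<le> sqrt (2 * \<bar>a\<bar>)" by (simp add: real_le_rsqrt)
  then show ?thesis by (simp add: real_sqrt_mult)
qed

lemma chain_mono:
  fixes \<phi> :: "real \<Rightarrow> real"
  assumes T: "T > 0" and loc: "\<And>t u. T \<le> t \<Longrightarrow> t \<le> u \<Longrightarrow> u \<le> 2 * t \<Longrightarrow> \<phi> t \<le> \<phi> u"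
    and tu: "T \<le> t" "t \<le> u"
  shows "\<phi> t \<le> \<phi> u"
proof -
  have "\<forall>t u. T \<le> t \<longrightarrow> t \<le> u \<longrightarrow> u \<le> 2^n * t \<longrightarrow> \<phi> t \<le> \<phi> u" for n
  proof (induction n)
    case 0 then show ?case by auto
  next
    case (Suc n)
    show ?case
    proof (intro allI impI)
      fix t u assume a: "T \<le> t" "t \<le> u" "u \<le> 2 ^ Suc n * t"
      show "\<phi> t \<le> \<phi> u"
      proof (cases "u \<le> 2 * t")
        case True then show ?thesis using loc a by auto
      next
        case False
        have "\<phi> t \<le> \<phi> (2 * t)" using loc[of t "2*t"] a T by auto
        also have "\<phi> (2 * t) \<le> \<phi> u" using Suc.IH a False T by (auto simp: mult_ac)
        finally show ?thesis .
      qed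
    qed
  qed
  moreover obtain n where "u / t < 2 ^ n" using real_arch_pow[of 2 "u / t"] by auto
  then have "u \<le> 2^n * t" using tu T by (simp add: divide_simps)
  ultimately show ?thesis using tu by auto
qed

lemma local_ineq:
  fixes t u aT au jt ju h \<eta> c :: real
  assumes tu: "0 < t" "t \<le> u" "u \<le> 2 * t" and h: "0 \<le> h" and at0: "0 \<le> aT"
    and A: "au \<ge> aT - (u - t) * h" and J: "ju \<le> jt + (u * sqrt u - t * sqrt t) * h"
    and th: "t * h \<le> \<eta> * aT" and c: "0 < c" "c \<le> 1" "10 * \<eta> \<le> c"
  shows "c * sqrt t * aT - jt \<le> c * sqrt u * au - ju"
proof -
  define s where "s = sqrt t"
  define r where "r = sqrt u"
  have s0: "0 < s" using tu by (simp add: s_def)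
  have sr: "s \<le> r" using tu by (simp add: s_def r_def)
  have ts: "t = s^2" using tu by (simp add: s_def)
  have ur: "u = r^2" using tu by (simp add: r_def)
  have r2: "r^2 \<le> 2 * s^2" using tu ts ur by simp
  have r15: "r \<le> 3/2 * s"
  proof -
    have e: "(3/2 * s)^2 = 9/4 * s^2" by (simp add: power2_eq_square)
    have "r^2 \<le> 9/4 * s^2" using r2 zero_le_power2[of s] by linarith
    then have "r^2 \<le> (3/2 * s)^2" by (simp only: e)
    moreover have "0 \<le> 3/2 * s" using s0 by simp
    ultimately show ?thesis by (rule power2_le_imp_le)
  qed
  have b1: "r * (r + s) \<le> 4 * s^2"
  proof -
    have 1: "r * (r + s) = r^2 + r * s" by (simp add: algebra_simps power2_eq_square)
    have 2: "r * s \<le> 3/2 * s * s" using r15 s0 by (intro mult_right_mono) auto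
    have 3: "s * s = s^2" by (simp add: power2_eq_square)
    show ?thesis using 1 2 3 r2 zero_le_power2[of s] by linarith
  qed
  have b2: "r^2 + r * s + s^2 \<le> 5 * s^2"
  proof -
    have 2: "r * s \<le> 3/2 * s * s" using r15 s0 by (intro mult_right_mono) auto
    have 3: "s * s = s^2" by (simp add: power2_eq_square)
    show ?thesis using 2 3 r2 zero_le_power2[of s] by linarith
  qed
  have br: "c * r * (r + s) * h + (r^2 + r * s + s^2) * h \<le> c * aT"
  proof -
    have "c * (r * (r + s)) \<le> c * (4 * s^2)" using b1 c by (intro mult_left_mono) auto
    then have "c * (r * (r + s)) * h \<le> c * (4 * s^2) * h" using h by (rule mult_right_mono)
    then have "c * r * (r + s) * h \<le> c * (4 * s^2) * h" by (simp only: mult.assoc)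
    moreover have "(r^2 + r * s + s^2) * h \<le> 5 * s^2 * h" using b2 h by (rule mult_right_mono)
    moreover have "c * (4 * s^2) * h + 5 * s^2 * h = (4 * c + 5) * (s^2 * h)"
      by (simp add: algebra_simps)
    ultimately have "c * r * (r + s) * h + (r^2 + r * s + s^2) * h \<le> (4 * c + 5) * (s^2 * h)"
      by linarith
    also have "\<dots> \<le> 9 * (s^2 * h)" using c h by (intro mult_right_mono) auto
    also have "\<dots> \<le> 9 * (\<eta> * aT)" using th ts by simp
    also have "\<dots> \<le> c * aT"
    proof -
      have "9 * \<eta> \<le> c" using c by linarith
      then have "(9 * \<eta>) * aT \<le> c * aT" using at0 by (rule mult_right_mono)
      then show ?thesis by (simp add: mult.assoc)
    qed
    finally show ?thesis .
  qed
  have "c * sqrt u * au - ju \<ge> c * r * (aT - (r^2 - s^2) * h) - (jt + (r^2 * r - s^2 * s) * h)"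
  proof -
    have "aT - (r^2 - s^2) * h \<le> au" using A ts ur by simp
    moreover have "0 \<le> c * r" using c s0 sr by simp
    ultimately have 1: "c * r * au \<ge> c * r * (aT - (r^2 - s^2) * h)" by (rule mult_left_mono)
    have e1: "u * sqrt u = r^2 * r" using ur r_def by simp
    have e2: "t * sqrt t = s^2 * s" using ts s_def by simp
    have 2: "ju \<le> jt + (r^2 * r - s^2 * s) * h" using J unfolding e1 e2 .
    have 3: "c * sqrt u * au = c * r * au" by (simp add: r_def)
    show ?thesis using 1 2 3 by linarith
  qed
  moreover have "c * r * (aT - (r^2 - s^2) * h) - (jt + (r^2 * r - s^2 * s) * h) - (c * s * aT - jt)
      = (r - s) * (c * aT - (c * r * (r + s) * h + (r^2 + r * s + s^2) * h))"
    by (simp add: algebra_simps power2_eq_square)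
  moreover have "(r - s) * (c * aT - (c * r * (r + s) * h + (r^2 + r * s + s^2) * h)) \<ge> 0"
    using sr br by simp
  moreover have "c * sqrt t * aT = c * s * aT" by (simp add: s_def)
  ultimately show ?thesis by linarith
qed



definition At :: "'a measure \<Rightarrow> ('a \<Rightarrow> real) \<Rightarrow> real \<Rightarrow> real" where
  "At M X t = (\<integral>w. max (- t) (min t (X w)) \<partial>M)"

definition Jt :: "'a measure \<Rightarrow> ('a \<Rightarrow> real) \<Rightarrow> real \<Rightarrow> real" where
  "Jt M X t = (\<integral>w. min (abs (X w)) t * sqrt (min (abs (X w)) t) \<partial>M)"

definition Hp :: "'a measure \<Rightarrow> ('a \<Rightarrow> real) \<Rightarrow> real \<Rightarrow> real" where
  "Hp M X t = measure M {w\<in>space M. t < \<bar>X w\<bar>}"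

lemma int_ind_bound:
  fixes f :: "'a \<Rightarrow> real"
  assumes P: "prob_space M" and f: "f \<in> borel_measurable M" and B: "\<And>w. w \<in> space M \<Longrightarrow> \<bar>f w\<bar> \<le> B"
    and S: "S \<in> sets M" and le: "\<And>w. w \<in> space M \<Longrightarrow> f w \<le> c * indicator S w"
  shows "(\<integral>w. f w \<partial>M) \<le> c * measure M S"
proof -
  interpret prob_space M by fact
  have i1: "integrable M f" using f B by (intro integrable_const_bound[where B=B]) auto
  have i2: "integrable M (\<lambda>w. c * indicator S w)"
    using S by (intro integrable_const_bound[where B="\<bar>c\<bar>"]) (auto simp: indicator_def)
  have "(\<integral>w. f w \<partial>M) \<le> (\<integral>w. c * indicator S w \<partial>M)"
    using i1 i2 le by (intro integral_mono) auto
  also have "\<dots> = c * measure M S" using S by (simp add: Int_absorb2 sets.sets_into_space)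
  finally show ?thesis .
qed

lemma At_incr:
  assumes P: "prob_space M" and X: "X \<in> borel_measurable M" and tu: "0 \<le> t" "t \<le> u"
  shows "At M X t - (u - t) * Hp M X t \<le> At M X u"
proof -
  interpret prob_space M by fact
  have Sm: "{w\<in>space M. t < \<bar>X w\<bar>} \<in> sets M" using X by measurable
  have it: "integrable M (\<lambda>w. max (- t) (min t (X w)))"
    using X tu by (intro integrable_const_bound[where B=t]) auto
  have iu: "integrable M (\<lambda>w. max (- u) (min u (X w)))"
    using X tu by (intro integrable_const_bound[where B=u]) auto
  have "At M X t - At M X u = (\<integral>w. max (- t) (min t (X w)) - max (- u) (min u (X w)) \<partial>M)"
    unfolding At_def using it iu by (rule Bochner_Integration.integral_diff[symmetric])
  also have "\<dots> \<le> (u - t) * measure M {w\<in>space M. t < \<bar>X w\<bar>}"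
  proof (rule int_ind_bound[OF P _ _ Sm])
    show "(\<lambda>w. max (- t) (min t (X w)) - max (- u) (min u (X w))) \<in> borel_measurable M"
      using X by measurable
    show "\<bar>max (- t) (min t (X w)) - max (- u) (min u (X w))\<bar> \<le> t + u" for w
      using tu by auto
    show "max (- t) (min t (X w)) - max (- u) (min u (X w)) \<le> (u - t) * indicator {w\<in>space M. t < \<bar>X w\<bar>} w"
      if "w \<in> space M" for w
      using tu that by (auto simp: indicator_def)
  qed
  finally show ?thesis unfolding Hp_def by linarith
qed

lemma Jt_incr:
  assumes P: "prob_space M" and X: "X \<in> borel_measurable M" and tu: "0 \<le> t" "t \<le> u"
  shows "Jt M X u \<le> Jt M X t + (u * sqrt u - t * sqrt t) * Hp M X t"
proof -
  interpret prob_space M by fact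
  have Sm: "{w\<in>space M. t < \<bar>X w\<bar>} \<in> sets M" using X by measurable
  have bnd: "abs (min (abs (X w)) v * sqrt (min (abs (X w)) v)) \<le> v * sqrt v" if "0 \<le> v" for v w
  proof -
    have "min (abs (X w)) v * sqrt (min (abs (X w)) v) \<le> v * sqrt v"
      using that by (intro mult_mono) auto
    then show ?thesis using that by simp
  qed
  have ii: "integrable M (\<lambda>w. min (abs (X w)) v * sqrt (min (abs (X w)) v))" if "0 \<le> v" for v
    using X bnd[OF that] by (intro integrable_const_bound[where B="v * sqrt v"]) auto
  have "Jt M X u - Jt M X t = (\<integral>w. min (abs (X w)) u * sqrt (min (abs (X w)) u) - min (abs (X w)) t * sqrt (min (abs (X w)) t) \<partial>M)"
    unfolding Jt_def using ii tu by (intro Bochner_Integration.integral_diff[symmetric]) auto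
  also have "\<dots> \<le> (u * sqrt u - t * sqrt t) * measure M {w\<in>space M. t < \<bar>X w\<bar>}"
  proof (rule int_ind_bound[OF P _ _ Sm])
    show "(\<lambda>w. min (abs (X w)) u * sqrt (min (abs (X w)) u) - min (abs (X w)) t * sqrt (min (abs (X w)) t)) \<in> borel_measurable M"
      using X by measurable
    show "abs (min (abs (X w)) u * sqrt (min (abs (X w)) u) - min (abs (X w)) t * sqrt (min (abs (X w)) t)) \<le> u * sqrt u + t * sqrt t" for w
      using bnd[of u w] bnd[of t w] tu by linarith
    show "min (abs (X w)) u * sqrt (min (abs (X w)) u) - min (abs (X w)) t * sqrt (min (abs (X w)) t) \<le> (u * sqrt u - t * sqrt t) * indicator {w\<in>space M. t < \<bar>X w\<bar>} w"
      if "w \<in> space M" for w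
    proof (cases "t < \<bar>X w\<bar>")
      case True
      have "min (abs (X w)) u * sqrt (min (abs (X w)) u) \<le> u * sqrt u" using tu by (intro mult_mono) auto
      moreover have "min (abs (X w)) t = t" using True by simp
      ultimately show ?thesis using True that by (simp add: indicator_def)
    next
      case False
      then have "min (abs (X w)) u = \<bar>X w\<bar>" "min (abs (X w)) t = \<bar>X w\<bar>" using tu by auto
      then show ?thesis using False by (simp add: indicator_def)
    qed
  qed
  finally show ?thesis unfolding Hp_def by linarith
qed


lemma Jt_tendsto:
  assumes P: "prob_space M" and X: "X \<in> borel_measurable M"
    and inf: "(\<integral>\<^sup>+ w. ennreal \<bar>X w\<bar> \<partial>M) = \<infinity>"
  shows "filterlim (Jt M X) at_top at_top"
proof -
  interpret prob_space M by fact
  define Et where "Et = (\<lambda>t. \<integral>w. min (abs (X w)) t \<partial>M)"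
  have iE: "integrable M (\<lambda>w. min (abs (X w)) t)" if "0 \<le> t" for t
    using X that by (intro integrable_const_bound[where B=t]) auto
  have JE: "Et t - 1 \<le> Jt M X t" if t: "0 \<le> t" for t
  proof -
    have iJ: "integrable M (\<lambda>w. min (abs (X w)) t * sqrt (min (abs (X w)) t))"
      using X t by (intro integrable_const_bound[where B="t * sqrt t"]) (auto intro!: mult_mono)
    have pw: "min (abs (X w)) t - 1 \<le> min (abs (X w)) t * sqrt (min (abs (X w)) t)" for w
    proof (cases "1 \<le> min (abs (X w)) t")
      case True
      then have "min (abs (X w)) t * 1 \<le> min (abs (X w)) t * sqrt (min (abs (X w)) t)"
        by (intro mult_left_mono) auto
      then show ?thesis by simp
    next
      case False
      have "0 \<le> min (abs (X w)) t * sqrt (min (abs (X w)) t)" using t by simp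
      then show ?thesis using False by linarith
    qed
    have "Et t - 1 = (\<integral>w. min (abs (X w)) t - 1 \<partial>M)"
      unfolding Et_def using iE[OF t] by (simp add: prob_space)
    also have "\<dots> \<le> Jt M X t" unfolding Jt_def
      using iE[OF t] iJ pw by (intro integral_mono) auto
    finally show ?thesis .
  qed
  have Emono: "Et s \<le> Et t" if "0 \<le> s" "s \<le> t" for s t
    unfolding Et_def using iE that by (intro integral_mono) auto
  define f where "f = (\<lambda>n w. ennreal (min (abs (X w)) (real n)))"
  have "(\<lambda>n. integral\<^sup>N M (f n)) \<longlonglongrightarrow> (\<integral>\<^sup>+ w. ennreal \<bar>X w\<bar> \<partial>M)"
  proof (rule nn_integral_LIMSEQ)
    show "incseq f" unfolding f_def incseq_def le_fun_def
      by (auto intro!: ennreal_leI)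
    show "f i \<in> borel_measurable M" for i unfolding f_def using X by measurable
    show "(\<lambda>i. f i w) \<longlonglongrightarrow> ennreal \<bar>X w\<bar>" for w
    proof (rule tendsto_eventually)
      obtain N :: nat where "\<bar>X w\<bar> \<le> real N" using real_arch_simple by blast
      then show "\<forall>\<^sub>F i in sequentially. f i w = ennreal \<bar>X w\<bar>"
        unfolding f_def eventually_sequentially by (intro exI[of _ N]) auto
    qed
  qed
  moreover have "integral\<^sup>N M (f n) = ennreal (Et (real n))" for n
    unfolding f_def Et_def using iE[of "real n"] by (intro nn_integral_eq_integral) auto
  ultimately have lim: "(\<lambda>n. ennreal (Et (real n))) \<longlonglongrightarrow> \<infinity>" using inf by simp
  show ?thesis
    unfolding filterlim_at_top
  proof (intro allI)
    fix Z :: real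
    have "ennreal (max 0 (Z + 1)) < \<infinity>" by simp
    from order_tendstoD(1)[OF lim this]
    obtain n where n: "ennreal (max 0 (Z + 1)) < ennreal (Et (real n))"
      unfolding eventually_sequentially by auto
    then have "Z + 1 < Et (real n)"
      by (metis ennreal_less_iff ennreal_less_zero_iff max.strict_boundedE max_def not_le)
    show "\<forall>\<^sub>F t in at_top. Z \<le> Jt M X t"
      unfolding eventually_at_top_linorder
    proof (intro exI[of _ "real n"] allI impI)
      fix t assume "real n \<le> t"
      then have "Et (real n) \<le> Et t" by (intro Emono) auto
      then show "Z \<le> Jt M X t" using JE[of t] \<open>real n \<le> t\<close> \<open>Z + 1 < Et (real n)\<close> by auto
    qed
  qed
qed


lemma main_bound:
  fixes x \<theta> :: real and X :: "'a \<Rightarrow> real"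
  assumes P: "prob_space M" and X: "X \<in> borel_measurable M" and x: "0 < x" and th: "1 < \<bar>\<theta>\<bar> * x"
  defines "S \<equiv> {w\<in>space M. \<bar>X w\<bar> < x}"
  shows "norm ((\<integral>w. indicator S w *\<^sub>R (complex_of_real (X w) * cis (\<theta> * X w)) \<partial>M) - complex_of_real (At M X x))
     \<le> (sqrt 2 + 1) * sqrt \<bar>\<theta>\<bar> * Jt M X x"
proof -
  interpret prob_space M by fact
  define K where "K = (sqrt 2 + 1) * sqrt \<bar>\<theta>\<bar>"
  have K0: "0 \<le> K" unfolding K_def by simp
  have Sm: "S \<in> sets M" unfolding S_def using X by measurable
  have cm: "(\<lambda>w. cis (\<theta> * X w)) \<in> borel_measurable M" by (rule cis_meas[OF X])
  have Xc: "(\<lambda>w. complex_of_real (X w)) \<in> borel_measurable M" using X by measurable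
  have bS: "w \<in> S \<Longrightarrow> \<bar>X w\<bar> \<le> x" for w unfolding S_def by auto
  define g1 where "g1 = (\<lambda>w. indicator S w *\<^sub>R (complex_of_real (X w) * cis (\<theta> * X w)))"
  define g2 where "g2 = (\<lambda>w. complex_of_real (max (- x) (min x (X w))))"
  have i1: "integrable M g1" unfolding g1_def
    using Sm cm Xc bS by (intro integrableI_bounded_set_indicator[where B=x]) (auto simp: norm_mult emeasure_eq_measure)
  have m2: "g2 \<in> borel_measurable M" unfolding g2_def using X by measurable
  have i2: "integrable M g2" 
    using m2 x by (intro integrable_const_bound[where B=x]) (auto simp: g2_def)
  have mJ: "(\<lambda>w. min (abs (X w)) x * sqrt (min (abs (X w)) x)) \<in> borel_measurable M" using X by measurable
  have iJ: "integrable M (\<lambda>w. K * (min (abs (X w)) x * sqrt (min (abs (X w)) x)))"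
    using mJ x by (intro Bochner_Integration.integrable_mult_right integrable_const_bound[where B="x * sqrt x"])
       (auto intro!: mult_mono)
  have eq: "(\<integral>w. g1 w \<partial>M) - complex_of_real (At M X x) = (\<integral>w. g1 w - g2 w \<partial>M)"
    unfolding At_def g2_def using i1 i2 unfolding g2_def
    by (simp add: Bochner_Integration.integral_diff)
  have pw: "norm (g1 w - g2 w) \<le> K * (min (abs (X w)) x * sqrt (min (abs (X w)) x))" if w: "w \<in> space M" for w
  proof (cases "w \<in> S")
    case True
    then have ax: "\<bar>X w\<bar> < x" unfolding S_def by auto
    then have "max (- x) (min x (X w)) = X w" by auto
    then have "g1 w - g2 w = complex_of_real (X w) * (cis (\<theta> * X w) - 1)"
      using True by (simp add: g1_def g2_def algebra_simps)
    then have "norm (g1 w - g2 w) = \<bar>X w\<bar> * norm (cis (\<theta> * X w) - 1)"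
      by (simp add: norm_mult)
    also have "\<dots> \<le> \<bar>X w\<bar> * (sqrt 2 * sqrt \<bar>\<theta> * X w\<bar>)"
      by (intro mult_left_mono cis_sub1_bound) auto
    also have "\<dots> = sqrt 2 * sqrt \<bar>\<theta>\<bar> * (\<bar>X w\<bar> * sqrt \<bar>X w\<bar>)"
      by (simp add: abs_mult real_sqrt_mult)
    also have "\<dots> \<le> K * (\<bar>X w\<bar> * sqrt \<bar>X w\<bar>)"
      unfolding K_def using x by (intro mult_right_mono) (auto simp: algebra_simps)
    also have "\<bar>X w\<bar> = min (abs (X w)) x" using ax by simp
    finally show ?thesis .
  next
    case False
    then have ax: "x \<le> \<bar>X w\<bar>" using w unfolding S_def by auto
    then have "\<bar>max (- x) (min x (X w))\<bar> = x" using x by auto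
    then have "norm (g1 w - g2 w) = x" using False by (simp add: g1_def g2_def)
    also have "\<dots> \<le> K * (x * sqrt x)"
    proof -
      have "1 \<le> sqrt (\<bar>\<theta>\<bar> * x)" using th by simp
      also have "\<dots> \<le> K * sqrt x"
      proof -
        have "sqrt (\<bar>\<theta>\<bar> * x) = 1 * (sqrt \<bar>\<theta>\<bar> * sqrt x)" by (simp add: real_sqrt_mult)
        also have "\<dots> \<le> (sqrt 2 + 1) * (sqrt \<bar>\<theta>\<bar> * sqrt x)"
          using x by (intro mult_right_mono) auto
        finally show ?thesis unfolding K_def by (simp add: mult_ac)
      qed
      finally have "x * 1 \<le> x * (K * sqrt x)" using x by (intro mult_left_mono) auto
      then show ?thesis by (simp add: mult_ac)
    qed
    also have "x = min (abs (X w)) x" using ax by simp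
    finally show ?thesis .
  qed
  have "norm (\<integral>w. g1 w - g2 w \<partial>M) \<le> (\<integral>w. norm (g1 w - g2 w) \<partial>M)"
    by (rule integral_norm_bound)
  also have "\<dots> \<le> (\<integral>w. K * (min (abs (X w)) x * sqrt (min (abs (X w)) x)) \<partial>M)"
    using i1 i2 iJ pw by (intro integral_mono) auto
  also have "\<dots> = K * Jt M X x" unfolding Jt_def by simp
  finally show ?thesis using eq unfolding g1_def K_def by simp
qed



lemma eps_construct:
  fixes L B :: "real \<Rightarrow> real \<Rightarrow> real" and P :: "real \<Rightarrow> real \<Rightarrow> bool"
  assumes ev: "\<And>\<delta>. \<delta> > 0 \<Longrightarrow> eventually (\<lambda>x. \<forall>\<theta>. P x \<theta> \<longrightarrow> L x \<theta> \<le> \<delta> * B x \<theta>) at_top"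
    and B0: "eventually (\<lambda>x. \<forall>\<theta>. P x \<theta> \<longrightarrow> 0 \<le> B x \<theta>) at_top"
  shows "\<exists>\<epsilon>. (\<epsilon> \<longlongrightarrow> 0) at_top \<and> eventually (\<lambda>x. \<forall>\<theta>. P x \<theta> \<longrightarrow> L x \<theta> \<le> \<epsilon> x * B x \<theta>) at_top"
proof -
  define D where "D = (\<lambda>x. {\<delta>. \<delta> > 0 \<and> (\<forall>\<theta>. P x \<theta> \<longrightarrow> L x \<theta> \<le> \<delta> * B x \<theta>)})"
  define \<epsilon> where "\<epsilon> = (\<lambda>x. Inf (D x))"
  have bdd: "bdd_below (D x)" for x unfolding D_def by (rule bdd_belowI[of _ 0]) auto
  have up: "eventually (\<lambda>x. 0 \<le> \<epsilon> x \<and> \<epsilon> x \<le> \<delta>) at_top" if d: "\<delta> > 0" for \<delta>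
    using ev[OF d]
  proof eventually_elim
    case (elim x)
    then have "\<delta> \<in> D x" using d unfolding D_def by auto
    then have ne: "D x \<noteq> {}" by auto
    have "\<epsilon> x \<le> \<delta>" unfolding \<epsilon>_def by (rule cInf_lower[OF \<open>\<delta> \<in> D x\<close> bdd])
    moreover have "0 \<le> \<epsilon> x" unfolding \<epsilon>_def using ne by (intro cInf_greatest) (auto simp: D_def)
    ultimately show ?case by simp
  qed
  have "(\<epsilon> \<longlongrightarrow> 0) at_top"
  proof (rule order_tendstoI)
    fix a :: real assume "a < 0"
    show "eventually (\<lambda>x. a < \<epsilon> x) at_top"
      using up[of 1, OF zero_less_one] \<open>a < 0\<close> by (auto elim!: eventually_mono)
  next
    fix a :: real assume a: "0 < a"
    show "eventually (\<lambda>x. \<epsilon> x < a) at_top"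
    proof -
      have "a / 2 > 0" using a by simp
      from up[OF this] show ?thesis using a by (auto elim!: eventually_mono)
    qed
  qed
  moreover have "eventually (\<lambda>x. \<forall>\<theta>. P x \<theta> \<longrightarrow> L x \<theta> \<le> \<epsilon> x * B x \<theta>) at_top"
    using ev[of 1, OF zero_less_one] B0
  proof eventually_elim
    case (elim x)
    then have "1 \<in> D x" unfolding D_def by auto
    then have ne: "D x \<noteq> {}" by auto
    show ?case
    proof (intro allI impI)
      fix \<theta> assume p: "P x \<theta>"
      show "L x \<theta> \<le> \<epsilon> x * B x \<theta>"
      proof (cases "B x \<theta> = 0")
        case True
        then show ?thesis using elim p by auto
      next
        case False
        then have Bp: "B x \<theta> > 0" using elim p by force
        have "L x \<theta> / B x \<theta> \<le> \<epsilon> x" unfolding \<epsilon>_def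
        proof (rule cInf_greatest[OF ne])
          fix d assume "d \<in> D x"
          then have "L x \<theta> \<le> d * B x \<theta>" using p unfolding D_def by auto
          then show "L x \<theta> / B x \<theta> \<le> d" using Bp by (simp add: divide_simps)
        qed
        then show ?thesis using Bp by (simp add: divide_simps)
      qed
    qed
  qed
  ultimately show ?thesis by blast
qed


lemma analytic:
  fixes X :: "'a \<Rightarrow> real"
  assumes P: "prob_space M" and X: "X \<in> borel_measurable M"
    and inf: "(\<integral>\<^sup>+ w. ennreal \<bar>X w\<bar> \<partial>M) = \<infinity>"
    and Ha: "filterlim (\<lambda>x. truncA M X x / (x * tailH M X x)) at_top at_top"
    and c: "0 < c" "c \<le> 1"
  shows "eventually (\<lambda>x. 0 < x \<and> 0 < At M X x \<and> Jt M X x \<le> 2 * c * sqrt x * At M X x) at_top"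
proof -
  interpret prob_space M by fact
  define \<eta> where "\<eta> = c / 10"
  have "eventually (\<lambda>x. 10 / c \<le> truncA M X x / (x * tailH M X x)) at_top"
    using Ha unfolding filterlim_at_top by blast
  moreover have "eventually (\<lambda>x::real. 1 \<le> x) at_top" using eventually_ge_at_top[of "1::real"] by simp
  ultimately have "eventually (\<lambda>x. 10 / c \<le> truncA M X x / (x * tailH M X x) \<and> 1 \<le> x) at_top"
    by (rule eventually_conj)
  then obtain T where T: "\<And>x. T \<le> x \<Longrightarrow> 10 / c \<le> truncA M X x / (x * tailH M X x) \<and> 1 \<le> x"
    unfolding eventually_at_top_linorder by blast
  have T1: "1 \<le> T" using T[of T] by simp
  have good: "0 < At M X x \<and> x * Hp M X x \<le> \<eta> * At M X x" if "T \<le> x" for x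
  proof -
    have x1: "1 \<le> x" using T[OF that] by simp
    have r: "10 / c \<le> At M X x / (x * Hp M X x)"
      using T[OF that] x1 truncA_eq[OF P X, of x] tailH_eq[OF P X, of x] by (simp add: At_def Hp_def)
    have H0: "0 \<le> Hp M X x" unfolding Hp_def by simp
    have "10 / c > 0" using c by simp
    then have "At M X x / (x * Hp M X x) > 0" using r by linarith
    then have xH: "x * Hp M X x > 0" using H0 x1
      by (metis divide_eq_0_iff less_eq_real_def linorder_not_le mult_nonneg_nonneg zero_le_one order_trans)
    then have "10 / c * (x * Hp M X x) \<le> At M X x" using r by (simp add: le_divide_eq)
    then have "x * Hp M X x \<le> c / 10 * At M X x" using c by (simp add: field_simps)
    moreover have "0 < At M X x" using \<open>10 / c * (x * Hp M X x) \<le> At M X x\<close> xH c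
      by (smt (verit) divide_pos_pos mult_pos_pos)
    ultimately show ?thesis unfolding \<eta>_def by simp
  qed
  define \<phi> where "\<phi> = (\<lambda>t. c * sqrt t * At M X t - Jt M X t)"
  have loc: "\<phi> t \<le> \<phi> u" if "T \<le> t" "t \<le> u" "u \<le> 2 * t" for t u
    unfolding \<phi>_def
  proof (rule local_ineq[where h="Hp M X t" and \<eta>=\<eta>])
    show "0 < t" using that T1 by simp
    show "t \<le> u" "u \<le> 2 * t" by fact+
    show "0 \<le> Hp M X t" unfolding Hp_def by simp
    show "0 \<le> At M X t" using good[OF that(1)] by simp
    show "At M X t - (u - t) * Hp M X t \<le> At M X u"
      using At_incr[OF P X, of t u] that T1 by simp
    show "Jt M X u \<le> Jt M X t + (u * sqrt u - t * sqrt t) * Hp M X t"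
      using Jt_incr[OF P X, of t u] that T1 by simp
    show "t * Hp M X t \<le> \<eta> * At M X t" using good[OF that(1)] by simp
    show "0 < c" "c \<le> 1" by fact+
    show "10 * \<eta> \<le> c" unfolding \<eta>_def by simp
  qed
  have mono: "\<phi> T \<le> \<phi> x" if "T \<le> x" for x
    using chain_mono[of T \<phi> T x] loc T1 that by auto
  have "eventually (\<lambda>x. 2 * Jt M X T \<le> Jt M X x) at_top"
    using Jt_tendsto[OF P X inf] unfolding filterlim_at_top by blast
  moreover have "eventually (\<lambda>x. T \<le> x) at_top" using eventually_ge_at_top[of T] by simp
  ultimately show ?thesis
  proof eventually_elim
    case (elim x)
    have x0: "0 < x" using elim T1 by simp
    have A0: "0 < At M X x" "0 < At M X T" using good[OF elim(2)] good[of T] by auto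
    have "c * sqrt T * At M X T \<ge> 0" using c A0 T1 by simp
    then have "Jt M X x \<le> c * sqrt x * At M X x + Jt M X T"
      using mono[OF elim(2)] unfolding \<phi>_def by linarith
    then have "Jt M X x \<le> 2 * c * sqrt x * At M X x" using elim(1) by linarith
    then show ?case using x0 A0 by simp
  qed
qed


theorem lemma7:
  fixes M :: "'a measure" and X :: "'a \<Rightarrow> real"
  assumes "prob_space M"
    and "X \<in> borel_measurable M"
    and "(\<integral>\<^sup>+ w. ennreal \<bar>X w\<bar> \<partial>M) = \<infinity>"
    and "filterlim (\<lambda>x. truncA M X x / (x * tailH M X x)) at_top at_top"
  shows "\<exists>\<epsilon> :: real \<Rightarrow> real. (\<epsilon> \<longlongrightarrow> 0) at_top \<and>
           (\<forall>\<^sub>F x in at_top. \<forall>\<theta>. \<bar>\<theta>\<bar> > 1 / x \<longrightarrow>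
              \<bar>norm (vector_derivative (omega M X x) (at \<theta>)) - truncA M X x\<bar>
                \<le> \<epsilon> x * truncA M X x * sqrt (\<bar>\<theta>\<bar> * x))"
proof -
  note P = assms(1) and X = assms(2)
  have main: "eventually (\<lambda>x. \<forall>\<theta>. \<bar>\<theta>\<bar> > 1 / x \<longrightarrow>
              \<bar>norm (vector_derivative (omega M X x) (at \<theta>)) - truncA M X x\<bar>
                \<le> \<delta> * (truncA M X x * sqrt (\<bar>\<theta>\<bar> * x))) at_top
     \<and> eventually (\<lambda>x. \<forall>\<theta>. \<bar>\<theta>\<bar> > 1 / x \<longrightarrow> 0 \<le> truncA M X x * sqrt (\<bar>\<theta>\<bar> * x)) at_top"
    if d: "\<delta> > 0" for \<delta>
  proof -
    define c where "c = min 1 (\<delta> / (2 * (sqrt 2 + 1)))"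
    have K0: "0 < 2 * (sqrt 2 + 1)" by (simp add: add_pos_nonneg)
    then have "0 < \<delta> / (2 * (sqrt 2 + 1))" using d by (rule divide_pos_pos[rotated])
    then have c: "0 < c" "c \<le> 1" unfolding c_def by auto
    have cd: "(sqrt 2 + 1) * (2 * c) \<le> \<delta>"
    proof -
      have "c \<le> \<delta> / (2 * (sqrt 2 + 1))" unfolding c_def by simp
      then have "c * (2 * (sqrt 2 + 1)) \<le> \<delta>" using K0 by (simp add: le_divide_eq)
      then show ?thesis by (simp add: mult_ac)
    qed
    have ev: "eventually (\<lambda>x. 0 < x \<and> 0 < At M X x \<and> Jt M X x \<le> 2 * c * sqrt x * At M X x) at_top"
      by (rule analytic[OF assms c])
    have "eventually (\<lambda>x. \<forall>\<theta>. \<bar>\<theta>\<bar> > 1 / x \<longrightarrow>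
              \<bar>norm (vector_derivative (omega M X x) (at \<theta>)) - truncA M X x\<bar>
                \<le> \<delta> * (truncA M X x * sqrt (\<bar>\<theta>\<bar> * x))) at_top"
      using ev
    proof eventually_elim
      case (elim x)
      have x0: "0 < x" and A0: "0 < At M X x" and J: "Jt M X x \<le> 2 * c * sqrt x * At M X x"
        using elim by auto
      have tA: "truncA M X x = At M X x" using truncA_eq[OF P X, of x] x0 by (simp add: At_def)
      show ?case
      proof (intro allI impI)
        fix \<theta> :: real assume th: "\<bar>\<theta>\<bar> > 1 / x"
        then have th1: "1 < \<bar>\<theta>\<bar> * x" using x0 by (simp add: divide_simps)
        define S where "S = {w\<in>space M. \<bar>X w\<bar> < x}"
        define Dv where "Dv = (\<lambda>\<theta>. \<integral>w. indicator S w *\<^sub>R (complex_of_real (X w) * cis (\<theta> * X w)) \<partial>M)"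
        have "(omega M X x has_vector_derivative (- \<i> * Dv \<theta>)) (at \<theta>)"
          unfolding Dv_def S_def by (rule omega_deriv[OF P X])
        then have vd: "vector_derivative (omega M X x) (at \<theta>) = - \<i> * Dv \<theta>"
          by (rule vector_derivative_at)
        have "\<bar>norm (vector_derivative (omega M X x) (at \<theta>)) - truncA M X x\<bar>
            = \<bar>norm (Dv \<theta>) - norm (complex_of_real (At M X x))\<bar>"
          unfolding vd tA using A0 by (simp add: norm_mult)
        also have "\<dots> \<le> norm (Dv \<theta> - complex_of_real (At M X x))"
          by (rule norm_triangle_ineq3)
        also have "\<dots> \<le> (sqrt 2 + 1) * sqrt \<bar>\<theta>\<bar> * Jt M X x"
          unfolding Dv_def S_def by (rule main_bound[OF P X x0 th1])
        also have "\<dots> \<le> (sqrt 2 + 1) * sqrt \<bar>\<theta>\<bar> * (2 * c * sqrt x * At M X x)"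
          using J by (intro mult_left_mono) auto
        also have "\<dots> = ((sqrt 2 + 1) * (2 * c)) * (At M X x * (sqrt \<bar>\<theta>\<bar> * sqrt x))"
          by (simp add: mult_ac)
        also have "\<dots> \<le> \<delta> * (At M X x * (sqrt \<bar>\<theta>\<bar> * sqrt x))"
          using cd A0 x0 by (intro mult_right_mono) auto
        also have "\<dots> = \<delta> * (truncA M X x * sqrt (\<bar>\<theta>\<bar> * x))"
          using tA by (simp add: real_sqrt_mult)
        finally show "\<bar>norm (vector_derivative (omega M X x) (at \<theta>)) - truncA M X x\<bar>
                \<le> \<delta> * (truncA M X x * sqrt (\<bar>\<theta>\<bar> * x))" .
      qed
    qed
    moreover have "eventually (\<lambda>x. \<forall>\<theta>. \<bar>\<theta>\<bar> > 1 / x \<longrightarrow> 0 \<le> truncA M X x * sqrt (\<bar>\<theta>\<bar> * x)) at_top"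
      using ev
    proof eventually_elim
      case (elim x)
      then have "truncA M X x = At M X x" using truncA_eq[OF P X, of x] by (simp add: At_def)
      then show ?case using elim by auto
    qed
    ultimately show ?thesis by blast
  qed
  have "\<exists>\<epsilon>. (\<epsilon> \<longlongrightarrow> 0) at_top \<and> eventually (\<lambda>x. \<forall>\<theta>. \<bar>\<theta>\<bar> > 1 / x \<longrightarrow>
              \<bar>norm (vector_derivative (omega M X x) (at \<theta>)) - truncA M X x\<bar>
                \<le> \<epsilon> x * (truncA M X x * sqrt (\<bar>\<theta>\<bar> * x))) at_top"
  proof (rule eps_construct[where P="\<lambda>x \<theta>. \<bar>\<theta>\<bar> > 1 / x"])
    fix \<delta> :: real assume "\<delta> > 0"
    from main[OF this] show "eventually (\<lambda>x. \<forall>\<theta>. \<bar>\<theta>\<bar> > 1 / x \<longrightarrow>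
              \<bar>norm (vector_derivative (omega M X x) (at \<theta>)) - truncA M X x\<bar>
                \<le> \<delta> * (truncA M X x * sqrt (\<bar>\<theta>\<bar> * x))) at_top" by blast
  next
    show "eventually (\<lambda>x. \<forall>\<theta>. \<bar>\<theta>\<bar> > 1 / x \<longrightarrow> 0 \<le> truncA M X x * sqrt (\<bar>\<theta>\<bar> * x)) at_top"
      using main[of 1] by simp
  qed
  then show ?thesis by (simp add: mult.assoc)
qed

end
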